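(* Let $G$ be a finite, connected, simple, bridgeless, triangle-free cubic graph, let $\Lambda$ be a valid labeling of $\mathfrak{L}_2(G)$ and let $\mathbb{X}\in\mathcal{X}$. Then: (a) if $\mathbb{X}$ contains an open edge of $\gamma_1$ and an open edge of $\gamma_2$ for two distinct cycles $\gamma_1,\gamma_2\in\Gamma_\Lambda$, then $\mathbb{X}$ is a Type B self-intersection with respect to $\mathcal{F}_{\mathbb{X}}(\Lambda)$; (b) if $\mathbb{X}$ is a Type B self-intersection with respect to $\Lambda$, then with respect to $\mathcal{F}_{\mathbb{X}}(\Lambda)$ the two open edges of $\mathbb{X}$ belong to two distinct (hence adjacent) cycles of $\Gamma_{\mathcal{F}_{\mathbb{X}}(\Lambda)}$; (c) if $\mathbb{X}$ is a Type A self-intersection with respect to $\Lambda$, then $\mathbb{X}$ is a Type A self-intersection with respect to $\mathcal{F}_{\mathbb{X}}(\Lambda)$.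
   Context: $\mathcal{L}(H)$ is the line graph of $H$. Let $\mathcal{T}$ be the set of triangles of $\mathcal{L}(\mathcal{L}(G))$ formed by the three edges of a triangle of $\mathcal{L}(G)$. $\mathfrak{L}_2(G)$ has the vertex set of $\mathcal{L}(\mathcal{L}(G))$ and the edges of $\mathcal{L}(\mathcal{L}(G))$ not in any triangle of $\mathcal{T}$. For each edge $e$ of $G$, the reduced clique $\mathbb{X}_e$ is the subgraph of $\mathfrak{L}_2(G)$ on the four edges of $\mathcal{L}(G)$ incident to $e$, with all edges of $\mathfrak{L}_2(G)$ among them; it is a 4-cycle. $\mathcal{X}$ is the set of reduced cliques. A labeling $\Lambda$ gives each edge of $\mathfrak{L}_2(G)$ a label in $\{0,1\}$ ($1$ = open, $0$ = closed); it is valid if in every reduced clique each vertex is incident to two edges of that clique with different labels (so the open edges of each $\mathbb{X}$ form a perfect matching of the 4-cycle $\mathbb{X}$). $\Gamma_\Lambda$ is the set of connected components (cycles) of the subgraph formed by open edges. The label inversion $\mathcal{F}_{\mathbb{X}}(\Lambda)$ is the valid labeling obtained from $\Lambda$ by replacing $\lambda_f$ by $1-\lambda_f$ for every edge $f$ of $\mathbb{X}$ and leaving all other labels unchanged. $\mathbb{X}$ is a self-intersection of $\gamma\in\Gamma_\Lambda$ if both open edges of $\mathbb{X}$ lie on $\gamma$. Write $\mathbb{X}$ as the 4-cycle $(x_1,x_2,x_3,x_4)$ with open edges $x_1x_2$ and $x_3x_4$; deleting these two edges from $\gamma$ leaves two vertex-disjoint paths with endpoint set $\{x_1,x_2,x_3,x_4\}$.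 The self-intersection is of Type B if these paths connect $x_2$ with $x_3$ and $x_4$ with $x_1$, and of Type A if they connect $x_1$ with $x_3$ and $x_2$ with $x_4$. *)

theory Defs
  imports Main
begin

definition simple_graph :: "'v set \<Rightarrow> 'v set set \<Rightarrow> bool" where
  "simple_graph V E \<longleftrightarrow> finite V \<and> (\<forall>e\<in>E. \<exists>u v. u \<noteq> v \<and> u \<in> V \<and> v \<in> V \<and> e = {u, v})"

definition adj_rel :: "'a set set \<Rightarrow> ('a \<times> 'a) set" where
  "adj_rel F = {(x, y). x \<noteq> y \<and> {x, y} \<in> F}"

definition reach :: "'a set set \<Rightarrow> 'a \<Rightarrow> 'a \<Rightarrow> bool" where
  "reach F u v \<longleftrightarrow> (u, v) \<in> (adj_rel F)\<^sup>*"

definition connected_graph :: "'v set \<Rightarrow> 'v set set \<Rightarrow> bool" where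
  "connected_graph V E \<longleftrightarrow> (\<forall>u\<in>V. \<forall>v\<in>V. reach E u v)"

definition bridgeless :: "'v set \<Rightarrow> 'v set set \<Rightarrow> bool" where
  "bridgeless V E \<longleftrightarrow> (\<forall>e\<in>E. \<forall>u v. e = {u, v} \<longrightarrow> reach (E - {e}) u v)"

definition triangle_free :: "'v set \<Rightarrow> 'v set set \<Rightarrow> bool" where
  "triangle_free V E \<longleftrightarrow> \<not> (\<exists>a b c. {a, b} \<in> E \<and> {b, c} \<in> E \<and> {a, c} \<in> E)"

definition cubic :: "'v set \<Rightarrow> 'v set set \<Rightarrow> bool" where
  "cubic V E \<longleftrightarrow> (\<forall>v\<in>V. card {e\<in>E. v \<in> e} = 3)"

text \<open>Edge set of the line graph of a graph with edge set E (its vertex set is E).\<close>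
definition LE :: "'a set set \<Rightarrow> 'a set set set" where
  "LE E = {{e, f} | e f. e \<in> E \<and> f \<in> E \<and> e \<noteq> f \<and> e \<inter> f \<noteq> {}}"

text \<open>Edges of the reduced line graph \<open>\<frak>L\<^sub>2(G)\<close>: edges of L(L(G)) not lying in any triangle
  of L(L(G)) formed by the three edges of a triangle {e1,e2,e3} of L(G).
  Its vertex set is LE E (the edges of L(G)).\<close>
definition L2_edges :: "'v set set \<Rightarrow> 'v set set set set" where
  "L2_edges E = {ab \<in> LE (LE E).
     \<not> (\<exists>e1 e2 e3. {e1, e2} \<in> LE E \<and> {e2, e3} \<in> LE E \<and> {e1, e3} \<in> LE E \<and>
          ab \<subseteq> {{e1, e2}, {e2, e3}, {e1, e3}})}"

definition Xv :: "'v set set \<Rightarrow> 'v set \<Rightarrow> 'v set set set" where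
  "Xv E e = {a \<in> LE E. e \<in> a}"

definition Xe :: "'v set set \<Rightarrow> 'v set \<Rightarrow> 'v set set set set" where
  "Xe E e = {f \<in> L2_edges E. f \<subseteq> Xv E e}"

definition cyc4 :: "'v set set \<Rightarrow> 'v set \<Rightarrow> 'v set set \<Rightarrow> 'v set set \<Rightarrow> 'v set set \<Rightarrow> 'v set set \<Rightarrow> bool" where
  "cyc4 E e x1 x2 x3 x4 \<longleftrightarrow> distinct [x1, x2, x3, x4] \<and> Xv E e = {x1, x2, x3, x4} \<and>
     Xe E e = {{x1, x2}, {x2, x3}, {x3, x4}, {x4, x1}}"

type_synonym 'v labeling = "'v set set set \<Rightarrow> nat"

definition valid_labeling :: "'v set set \<Rightarrow> 'v labeling \<Rightarrow> bool" where
  "valid_labeling E lam \<longleftrightarrow> (\<forall>f\<in>L2_edges E. lam f \<in> {0, 1}) \<and>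
     (\<forall>e\<in>E. \<forall>x\<in>Xv E e. \<exists>f1\<in>Xe E e. \<exists>f2\<in>Xe E e. x \<in> f1 \<and> x \<in> f2 \<and> lam f1 \<noteq> lam f2)"

definition open_edges :: "'v set set \<Rightarrow> 'v labeling \<Rightarrow> 'v set set set set" where
  "open_edges E lam = {f \<in> L2_edges E. lam f = 1}"

text \<open>\<open>\<Gamma>_\<Lambda>\<close>: connected components (as vertex sets) of the subgraph formed by the open edges.\<close>
definition Gamma :: "'v set set \<Rightarrow> 'v labeling \<Rightarrow> 'v set set set set" where
  "Gamma E lam = {{y \<in> \<Union>(open_edges E lam). reach (open_edges E lam) x y} | x. x \<in> \<Union>(open_edges E lam)}"

definition flip :: "'v set set \<Rightarrow> 'v set \<Rightarrow> 'v labeling \<Rightarrow> 'v labeling" where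
  "flip E e lam = (\<lambda>f. if f \<in> Xe E e then 1 - lam f else lam f)"

definition self_intersection :: "'v set set \<Rightarrow> 'v labeling \<Rightarrow> 'v set \<Rightarrow> 'v set set set \<Rightarrow> bool" where
  "self_intersection E lam e \<gamma> \<longleftrightarrow> \<gamma> \<in> Gamma E lam \<and>
     (\<forall>f\<in>Xe E e. lam f = 1 \<longrightarrow> f \<subseteq> \<gamma>)"

definition cyc_edges :: "'v set set \<Rightarrow> 'v labeling \<Rightarrow> 'v set set set \<Rightarrow> 'v set set set set" where
  "cyc_edges E lam \<gamma> = {f \<in> open_edges E lam. f \<subseteq> \<gamma>}"

definition typeB :: "'v set set \<Rightarrow> 'v labeling \<Rightarrow> 'v set \<Rightarrow> bool" where
  "typeB E lam e \<longleftrightarrow> (\<exists>\<gamma>. self_intersection E lam e \<gamma> \<and>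
     (\<exists>x1 x2 x3 x4. cyc4 E e x1 x2 x3 x4 \<and> lam {x1, x2} = 1 \<and> lam {x3, x4} = 1 \<and>
        reach (cyc_edges E lam \<gamma> - {{x1, x2}, {x3, x4}}) x2 x3 \<and>
        reach (cyc_edges E lam \<gamma> - {{x1, x2}, {x3, x4}}) x4 x1))"

definition typeA :: "'v set set \<Rightarrow> 'v labeling \<Rightarrow> 'v set \<Rightarrow> bool" where
  "typeA E lam e \<longleftrightarrow> (\<exists>\<gamma>. self_intersection E lam e \<gamma> \<and>
     (\<exists>x1 x2 x3 x4. cyc4 E e x1 x2 x3 x4 \<and> lam {x1, x2} = 1 \<and> lam {x3, x4} = 1 \<and>
        reach (cyc_edges E lam \<gamma> - {{x1, x2}, {x3, x4}}) x1 x3 \<and>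
        reach (cyc_edges E lam \<gamma> - {{x1, x2}, {x3, x4}}) x2 x4))"

end

theory Submission
  imports Defs
begin


definition cmp :: "'a set set \<Rightarrow> 'a \<Rightarrow> 'a set" where
  "cmp F x = {y. reach F x y}"

definition twosets :: "'a set set \<Rightarrow> bool" where
  "twosets F \<longleftrightarrow> (\<forall>f\<in>F. \<exists>p q. p \<noteq> q \<and> f = {p,q})"

lemma adj_rel_sym: "(x,y) \<in> adj_rel F \<Longrightarrow> (y,x) \<in> adj_rel F"
  by (auto simp: adj_rel_def insert_commute)

lemma reach_refl[simp]: "reach F x x" by (simp add: reach_def)

lemma reach_trans: "reach F x y \<Longrightarrow> reach F y z \<Longrightarrow> reach F x z"
  unfolding reach_def by (rule rtrancl_trans)

lemma reach_sym: "reach F x y \<Longrightarrow> reach F y x"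
  unfolding reach_def
proof (induction rule: rtrancl_induct)
  case base then show ?case by simp
next
  case (step y z)
  then show ?case by (meson adj_rel_sym converse_rtrancl_into_rtrancl)
qed

lemma reach_edge: "{p,q} \<in> F \<Longrightarrow> reach F p q"
  unfolding reach_def adj_rel_def by (cases "p = q") auto

lemma reach_cover:
  assumes "reach F x y" "\<And>p q. {p,q} \<in> F \<Longrightarrow> reach G p q"
  shows "reach G x y"
  using assms(1) unfolding reach_def
proof (induction rule: rtrancl_induct)
  case base then show ?case by simp
next
  case (step y z)
  then have "reach G y z" using assms(2) by (auto simp: adj_rel_def)
  then show ?case using step by (meson reach_def rtrancl_trans)
qed

lemma reach_mono: "reach F x y \<Longrightarrow> F \<subseteq> G \<Longrightarrow> reach G x y"
  by (erule reach_cover) (auto intro: reach_edge)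

lemma reach_endpoint: "reach F x y \<Longrightarrow> y \<noteq> x \<Longrightarrow> y \<in> \<Union>F"
  unfolding reach_def
proof (induction rule: rtrancl_induct)
  case base then show ?case by simp
next
  case (step y z)
  then show ?case by (auto simp: adj_rel_def)
qed

lemma reach_restrict:
  assumes "reach F x y" "cmp F x \<subseteq> S"
  shows "reach {f\<in>F. f \<subseteq> S} x y"
  using assms(1) unfolding reach_def
proof (induction rule: rtrancl_induct)
  case base then show ?case by simp
next
  case (step y z)
  then have "reach F x z" unfolding reach_def by simp
  with step assms(2) have "y \<in> S" "z \<in> S" by (auto simp: cmp_def reach_def)
  with step have "(y,z) \<in> adj_rel {f\<in>F. f \<subseteq> S}" by (auto simp: adj_rel_def)
  with step show ?case by simp
qed

lemma reach_insert:
  assumes "reach (insert {p,q} F) x y"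
  shows "reach F x y \<or> (reach F x p \<and> reach F q y) \<or> (reach F x q \<and> reach F p y)"
  using assms unfolding reach_def[of "insert _ _"]
proof (induction rule: rtrancl_induct)
  case base then show ?case by simp
next
  case (step y z)
  then have e: "{y,z} \<in> F \<or> (y = p \<and> z = q) \<or> (y = q \<and> z = p)"
    by (auto simp: adj_rel_def doubleton_eq_iff)
  show ?case
  proof (cases "{y,z} \<in> F")
    case True
    then have "reach F y z" by (rule reach_edge)
    with step.IH show ?thesis by (meson reach_trans)
  next
    case False
    with e have "(y = p \<and> z = q) \<or> (y = q \<and> z = p)" by simp
    then show ?thesis
    proof
      assume yz: "y = p \<and> z = q"
      from step.IH show ?thesis
      proof (elim disjE)
        assume "reach F x y" then show ?thesis using yz by simp
      next
        assume "reach F x p \<and> reach F q y" then show ?thesis using yz by simp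
      next
        assume "reach F x q \<and> reach F p y" then show ?thesis using yz by simp
      qed
    next
      assume yz: "y = q \<and> z = p"
      from step.IH show ?thesis
      proof (elim disjE)
        assume "reach F x y" then show ?thesis using yz by simp
      next
        assume "reach F x p \<and> reach F q y" then show ?thesis using yz by simp
      next
        assume "reach F x q \<and> reach F p y" then show ?thesis using yz by simp
      qed
    qed
  qed
qed

lemma cmp_eq: "reach F x y \<Longrightarrow> cmp F x = cmp F y"
  unfolding cmp_def by (auto intro: reach_trans reach_sym)

lemma cmp_sub: "cmp F x \<subseteq> insert x (\<Union>F)"
  unfolding cmp_def using reach_endpoint by fastforce

lemma twosets_finite: "twosets F \<Longrightarrow> f \<in> F \<Longrightarrow> finite f"
  unfolding twosets_def by auto

lemma finite_cmp: "finite F \<Longrightarrow> twosets F \<Longrightarrow> finite (cmp F x)"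
  by (meson cmp_sub finite.insertI finite_Union finite_subset twosets_finite)

lemma cmp_closed:
  assumes "f \<in> F" "twosets F" "f \<inter> cmp F x \<noteq> {}" shows "f \<subseteq> cmp F x"
proof -
  obtain p q where f: "f = {p,q}" using assms unfolding twosets_def by blast
  have "reach F p q" "reach F q p" using assms(1) f reach_edge[of p q F] reach_edge[of q p F]
    by (auto simp: insert_commute)
  then show ?thesis using assms(3) f unfolding cmp_def by (auto intro: reach_trans)
qed

lemma twosets_mono: "twosets F \<Longrightarrow> G \<subseteq> F \<Longrightarrow> twosets G"
  unfolding twosets_def by blast

lemma count_step:
  assumes fin: "finite F" and ts: "twosets F"
    and IH: "\<And>x. card (cmp F x) \<le> card {f\<in>F. f \<subseteq> cmp F x} + 1"
    and pq: "p \<noteq> q" "{p,q} \<notin> F" and px: "p \<in> cmp F x"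
  shows "card (cmp (insert {p,q} F) x) \<le> card {f\<in>insert {p,q} F. f \<subseteq> cmp (insert {p,q} F) x} + 1"
proof -
  let ?F = "insert {p,q} F"
  have ts': "twosets ?F" using ts pq unfolding twosets_def by blast
  have fin': "finite ?F" using fin by simp
  have Kp: "cmp F p = cmp F x" using px cmp_eq[of F x p] by (simp add: cmp_def)
  have K: "cmp ?F x = cmp F x \<union> cmp F q"
  proof
    show "cmp ?F x \<subseteq> cmp F x \<union> cmp F q"
    proof
      fix y assume "y \<in> cmp ?F x"
      then have "reach ?F x y" by (simp add: cmp_def)
      from reach_insert[OF this] show "y \<in> cmp F x \<union> cmp F q"
      proof (elim disjE)
        assume "reach F x y" then show ?thesis by (simp add: cmp_def)
      next
        assume "reach F x p \<and> reach F q y" then show ?thesis by (simp add: cmp_def)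
      next
        assume "reach F x q \<and> reach F p y"
        then have "y \<in> cmp F p" by (simp add: cmp_def)
        then show ?thesis using Kp by simp
      qed
    qed
  next
    have xp: "reach ?F x p" using px reach_mono[of F x p ?F] by (auto simp: cmp_def)
    have pq': "reach ?F p q" by (rule reach_edge) simp
    show "cmp F x \<union> cmp F q \<subseteq> cmp ?F x"
    proof
      fix y assume "y \<in> cmp F x \<union> cmp F q"
      then show "y \<in> cmp ?F x"
      proof
        assume "y \<in> cmp F x" then show ?thesis using reach_mono[of F x y ?F] by (auto simp: cmp_def)
      next
        assume "y \<in> cmp F q"
        then have "reach ?F q y" using reach_mono[of F q y ?F] by (auto simp: cmp_def)
        then show ?thesis using xp pq' by (auto simp: cmp_def intro: reach_trans)
      qed
    qed
  qed
  show ?thesis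
  proof (cases "q \<in> cmp F x")
    case True
    then have "cmp F q = cmp F x" using cmp_eq[of F x q] by (simp add: cmp_def)
    then have K2: "cmp ?F x = cmp F x" using K by simp
    have "{f\<in>F. f \<subseteq> cmp F x} \<subseteq> {f\<in>?F. f \<subseteq> cmp ?F x}" using K2 by auto
    then have "card {f\<in>F. f \<subseteq> cmp F x} \<le> card {f\<in>?F. f \<subseteq> cmp ?F x}"
      using fin' by (intro card_mono) auto
    then show ?thesis using IH[of x] K2 by simp
  next
    case False
    have disj: "cmp F x \<inter> cmp F q = {}"
    proof (rule ccontr)
      assume "cmp F x \<inter> cmp F q \<noteq> {}"
      then obtain y where "reach F x y" "reach F q y" by (auto simp: cmp_def)
      then have "reach F x q" by (meson reach_sym reach_trans)
      then show False using False by (simp add: cmp_def)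
    qed
    have c1: "card (cmp ?F x) = card (cmp F x) + card (cmp F q)"
      using K disj finite_cmp[OF fin ts] by (simp add: card_Un_disjoint)
    let ?A = "{f\<in>F. f \<subseteq> cmp F x}" and ?B = "{f\<in>F. f \<subseteq> cmp F q}"
    have AB: "?A \<inter> ?B = {}"
    proof (rule ccontr)
      assume "?A \<inter> ?B \<noteq> {}"
      then obtain f where "f \<in> F" "f \<subseteq> cmp F x" "f \<subseteq> cmp F q" by blast
      then have "f = {}" using disj by blast
      then show False using \<open>f \<in> F\<close> ts unfolding twosets_def by blast
    qed
    have sub: "insert {p,q} (?A \<union> ?B) \<subseteq> {f\<in>?F. f \<subseteq> cmp ?F x}"
      using K px by (auto simp: cmp_def)
    have finAB: "finite (?A \<union> ?B)" using fin by simp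
    have "card (insert {p,q} (?A \<union> ?B)) = card ?A + card ?B + 1"
      using AB pq(2) fin by (simp add: card_Un_disjoint)
    moreover have "card (insert {p,q} (?A \<union> ?B)) \<le> card {f\<in>?F. f \<subseteq> cmp ?F x}"
      using sub fin' by (intro card_mono) auto
    ultimately show ?thesis using c1 IH[of x] IH[of q] by simp
  qed
qed

lemma count_cmp:
  assumes "finite F" "twosets F"
  shows "card (cmp F x) \<le> card {f\<in>F. f \<subseteq> cmp F x} + 1"
  using assms
proof (induction F arbitrary: x rule: finite_induct)
  case empty
  have "cmp {} x = {x}" using reach_endpoint[of "{}" x] by (auto simp: cmp_def)
  then show ?case by simp
next
  case (insert f F)
  obtain p q where f: "f = {p,q}" "p \<noteq> q" using insert.prems unfolding twosets_def by blast
  have ts: "twosets F" using insert.prems twosets_mono by blast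
  have IH: "\<And>x. card (cmp F x) \<le> card {f\<in>F. f \<subseteq> cmp F x} + 1" using insert.IH ts by blast
  show ?case
  proof (cases "p \<in> cmp F x \<or> q \<in> cmp F x")
    case True
    then show ?thesis
    proof
      assume "p \<in> cmp F x"
      then show ?thesis using count_step[OF insert.hyps(1) ts IH f(2)] insert.hyps(2) f(1) by simp
    next
      assume "q \<in> cmp F x"
      then show ?thesis using count_step[OF insert.hyps(1) ts IH f(2)[symmetric]] insert.hyps(2) f(1)
        by (simp add: insert_commute)
    qed
  next
    case False
    have "cmp (insert f F) x = cmp F x"
    proof
      show "cmp (insert f F) x \<subseteq> cmp F x"
        using reach_insert[of p q F x] False f(1) by (auto simp: cmp_def)
      show "cmp F x \<subseteq> cmp (insert f F) x"
        using reach_mono[of F x _ "insert f F"] by (auto simp: cmp_def)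
    qed
    moreover have "card {g\<in>F. g \<subseteq> cmp F x} \<le> card {g\<in>insert f F. g \<subseteq> cmp F x}"
      using insert.hyps(1) by (intro card_mono) auto
    ultimately show ?thesis using IH[of x] by simp
  qed
qed

lemma handshake:
  assumes fin: "finite F" and ts: "twosets F" and finC: "finite C"
    and cl: "\<And>f. f \<in> F \<Longrightarrow> f \<inter> C \<noteq> {} \<Longrightarrow> f \<subseteq> C"
  shows "(\<Sum>w\<in>C. card {f\<in>F. w \<in> f}) = 2 * card {f\<in>F. f \<subseteq> C}"
proof -
  have "(\<Sum>w\<in>C. card {f\<in>F. w \<in> f}) = (\<Sum>w\<in>C. \<Sum>f\<in>F. if w \<in> f then 1 else 0)"
    using fin by (simp add: sum.inter_filter[symmetric])
  also have "\<dots> = (\<Sum>f\<in>F. \<Sum>w\<in>C. if w \<in> f then 1 else 0)"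
    by (rule sum.swap)
  also have "\<dots> = (\<Sum>f\<in>F. if f \<subseteq> C then 2 else 0)"
  proof (rule sum.cong)
    fix f assume f: "f \<in> F"
    obtain p q where pq: "f = {p,q}" "p \<noteq> q" using f ts unfolding twosets_def by blast
    have "(\<Sum>w\<in>C. if w \<in> f then 1 else 0) = card {w\<in>C. w \<in> f}"
      using finC by (simp add: sum.inter_filter[symmetric])
    also have "\<dots> = (if f \<subseteq> C then 2 else 0)"
    proof (cases "f \<subseteq> C")
      case True
      then have "{w\<in>C. w \<in> f} = f" by auto
      then show ?thesis using True pq by simp
    next
      case False
      then have "f \<inter> C = {}" using cl[OF f] by blast
      then have "{w\<in>C. w \<in> f} = {}" by auto
      then have "card {w\<in>C. w \<in> f} = 0" by (simp only: card.empty)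
      then show ?thesis using False by simp
    qed
    finally show "(\<Sum>w\<in>C. if w \<in> f then 1 else 0) = (if f \<subseteq> C then 2 else (0::nat))" .
  qed simp
  also have "\<dots> = 2 * card {f\<in>F. f \<subseteq> C}"
    using fin by (simp add: sum.inter_filter[symmetric])
  finally show ?thesis .
qed

lemma sum_12:
  assumes "finite C" "X \<subseteq> C"
  shows "(\<Sum>w\<in>C. if w \<in> X then 1 else 2::nat) + card X = 2 * card C"
proof -
  have fX: "finite X" using assms finite_subset by blast
  have "(\<Sum>w\<in>C. if w \<in> X then 1 else 2::nat) + card X
      = (\<Sum>w\<in>C. if w \<in> X then 1 else 2::nat) + (\<Sum>w\<in>C. if w \<in> X then 1 else 0)"
  proof -
    have "{w\<in>C. w \<in> X} = X" using assms by auto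
    then have "(\<Sum>w\<in>C. if w \<in> X then 1 else 0) = card X"
      using assms(1) sum.inter_filter[of C "\<lambda>_. 1::nat" "\<lambda>w. w \<in> X"] by simp
    then show ?thesis by simp
  qed
  also have "\<dots> = (\<Sum>w\<in>C. (if w \<in> X then 1 else 2::nat) + (if w \<in> X then 1 else 0))"
    by (simp add: sum.distrib)
  also have "\<dots> = (\<Sum>w\<in>C. 2)" by (rule sum.cong) auto
  also have "\<dots> = 2 * card C" by simp
  finally show ?thesis .
qed



lemma finite_E: "simple_graph V E \<Longrightarrow> finite E"
proof -
  assume sg: "simple_graph V E"
  then have "E \<subseteq> Pow V" unfolding simple_graph_def by auto
  moreover have "finite V" using sg unfolding simple_graph_def by simp
  ultimately show ?thesis using finite_subset[of E "Pow V"] by simp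
qed

lemma LE_sub: "LE E \<subseteq> Pow E" unfolding LE_def by auto

lemma finite_LE: "finite E \<Longrightarrow> finite (LE E)"
  using LE_sub[of E] finite_subset[of "LE E" "Pow E"] by simp

lemma L2_sub: "L2_edges E \<subseteq> LE (LE E)" unfolding L2_edges_def by auto

lemma finite_L2: "finite E \<Longrightarrow> finite (L2_edges E)"
  using L2_sub[of E] finite_LE[of "LE E"] finite_LE[of E] finite_subset by blast

lemma twosets_LE: "twosets (LE E)" unfolding twosets_def LE_def by blast

lemma twosets_L2: "twosets (L2_edges E)" using twosets_LE L2_sub twosets_mono by blast

lemma LE_elem: "x \<in> LE E \<Longrightarrow> y \<in> x \<Longrightarrow> y \<in> E"
  unfolding LE_def by auto

lemma L2_vert: "f \<in> L2_edges E \<Longrightarrow> w \<in> f \<Longrightarrow> w \<in> LE E"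
  using L2_sub LE_elem by blast

lemma card3_elim:
  assumes "card S = 3" "a \<in> S"
  obtains b c where "S = {a,b,c}" "b \<noteq> c" "b \<noteq> a" "c \<noteq> a"
proof -
  have "card (S - {a}) = 2" using assms by simp
  then obtain b c where "S - {a} = {b,c}" "b \<noteq> c" by (auto simp: card_2_iff)
  then have "S = {a,b,c}" "b \<noteq> a" "c \<noteq> a" using assms(2) by auto
  then show ?thesis using that \<open>b \<noteq> c\<close> by blast
qed

lemma LE_memI: "e \<in> E \<Longrightarrow> f \<in> E \<Longrightarrow> e \<noteq> f \<Longrightarrow> e \<inter> f \<noteq> {} \<Longrightarrow> {e,f} \<in> LE E"
  unfolding LE_def by blast

lemma LE_memD: assumes "{e,f} \<in> LE E" shows "e \<in> E" "f \<in> E" "e \<noteq> f" "e \<inter> f \<noteq> {}"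
proof -
  obtain e' f' where "{e,f} = {e',f'}" "e' \<in> E" "f' \<in> E" "e' \<noteq> f'" "e' \<inter> f' \<noteq> {}"
    using assms unfolding LE_def by blast
  then show "e \<in> E" "f \<in> E" "e \<noteq> f" "e \<inter> f \<noteq> {}" by (auto simp: doubleton_eq_iff Int_commute)
qed

lemma L2_notI:
  assumes "{e1, e2} \<in> LE E" "{e2, e3} \<in> LE E" "{e1, e3} \<in> LE E" "ab \<subseteq> {{e1, e2}, {e2, e3}, {e1, e3}}"
  shows "ab \<notin> L2_edges E"
  using assms unfolding L2_edges_def by blast

lemma L2_pair:
  assumes "a \<in> E" "g \<in> E" "h \<in> E" "g \<noteq> a" "h \<noteq> a" "g \<noteq> h" "a \<inter> g \<noteq> {}" "a \<inter> h \<noteq> {}"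
  shows "{{a,g},{a,h}} \<in> L2_edges E \<longleftrightarrow> g \<inter> h = {}"
proof
  assume L: "{{a,g},{a,h}} \<in> L2_edges E"
  show "g \<inter> h = {}"
  proof (rule ccontr)
    assume "g \<inter> h \<noteq> {}"
    then have "{a,g} \<in> LE E" "{g,h} \<in> LE E" "{a,h} \<in> LE E"
      using assms by (auto intro!: LE_memI)
    then have "{{a,g},{a,h}} \<notin> L2_edges E" by (intro L2_notI[of a g E h]) auto
    then show False using L by simp
  qed
next
  assume gh: "g \<inter> h = {}"
  have "{a,g} \<in> LE E" "{a,h} \<in> LE E" using assms by (auto intro!: LE_memI)
  moreover have "{a,g} \<noteq> {a,h}" using assms by (auto simp: doubleton_eq_iff)
  moreover have "{a,g} \<inter> {a,h} \<noteq> {}" by blast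
  ultimately have LL: "{{a,g},{a,h}} \<in> LE (LE E)" by (rule LE_memI)
  have no: False if T: "{e1, e2} \<in> LE E" "{e2, e3} \<in> LE E" "{e1, e3} \<in> LE E"
      and S: "{{a,g},{a,h}} \<subseteq> {{e1, e2}, {e2, e3}, {e1, e3}}" for e1 e2 e3
  proof -
    have "{a,g} \<in> {{a,g},{a,h}}" "{a,h} \<in> {{a,g},{a,h}}" by simp_all
    then have "{a,g} \<in> {{e1, e2}, {e2, e3}, {e1, e3}}" "{a,h} \<in> {{e1, e2}, {e2, e3}, {e1, e3}}"
      using S by (meson subsetD)+
    then have "g \<in> \<Union>{{e1, e2}, {e2, e3}, {e1, e3}}" "h \<in> \<Union>{{e1, e2}, {e2, e3}, {e1, e3}}"
      by (meson UnionI insertCI)+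
    then have g3: "g = e1 \<or> g = e2 \<or> g = e3" and h3: "h = e1 \<or> h = e2 \<or> h = e3" by (simp_all, blast+)
    have "{g,h} = {e1, e2} \<or> {g,h} = {e2, e3} \<or> {g,h} = {e1, e3}"
      using g3 h3 assms(6) by (elim disjE) (simp_all add: insert_commute)
    then have "{g,h} \<in> LE E" using T by (elim disjE) simp_all
    then have "g \<inter> h \<noteq> {}" by (rule LE_memD)
    then show False using gh by simp
  qed
  show "{{a,g},{a,h}} \<in> L2_edges E" unfolding L2_edges_def mem_Collect_eq
  proof (intro conjI notI)
    show "{{a,g},{a,h}} \<in> LE (LE E)" by (rule LL)
  next
    assume "\<exists>e1 e2 e3. {e1, e2} \<in> LE E \<and> {e2, e3} \<in> LE E \<and> {e1, e3} \<in> LE E \<and>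
          {{a,g},{a,h}} \<subseteq> {{e1, e2}, {e2, e3}, {e1, e3}}"
    then show False by (elim exE conjE) (rule no)
  qed
qed



lemma sg_edge: "simple_graph V E \<Longrightarrow> g \<in> E \<Longrightarrow> u \<in> g \<Longrightarrow> \<exists>p. g = {u,p} \<and> p \<noteq> u"
  unfolding simple_graph_def by (auto simp: insert_commute)

lemma disj_ab:
  assumes sg: "simple_graph V E" and tf: "triangle_free V E" and a: "a = {u,v}" "u \<noteq> v" "a \<in> E"
    and g: "g \<in> E" "u \<in> g" "g \<noteq> a" and h: "h \<in> E" "v \<in> h" "h \<noteq> a"
  shows "g \<inter> h = {}"
proof -
  obtain p where p: "g = {u,p}" "p \<noteq> u" using sg_edge[OF sg g(1,2)] by blast
  obtain q where q: "h = {v,q}" "q \<noteq> v" using sg_edge[OF sg h(1,2)] by blast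
  have pv: "p \<noteq> v" using p g(3) a by auto
  have qu: "q \<noteq> u" using q h(3) a by (auto simp: insert_commute)
  have pq: "p \<noteq> q"
  proof
    assume "p = q"
    then have "{u,v} \<in> E" "{v,p} \<in> E" "{u,p} \<in> E" using a g h p q by auto
    then show False using tf unfolding triangle_free_def by blast
  qed
  show ?thesis using p q pv qu pq a(2) by auto
qed

lemma twosetsE:
  assumes "twosets F" "f \<in> F"
  obtains p q where "f = {p,q}" "p \<noteq> q"
  using assms unfolding twosets_def by blast

lemma LE_with:
  assumes "w \<in> LE E" "a \<in> w"
  shows "\<exists>g. w = {a,g} \<and> g \<in> E \<and> g \<noteq> a \<and> a \<inter> g \<noteq> {}"
proof -
  obtain e f where ef: "w = {e,f}" "e \<in> E" "f \<in> E" "e \<noteq> f" "e \<inter> f \<noteq> {}"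
    using assms(1) unfolding LE_def by blast
  then have "a = e \<or> a = f" using assms(2) by simp
  then show ?thesis
  proof
    assume "a = e" then show ?thesis using ef by blast
  next
    assume "a = f"
    then have "w = {a,e} \<and> e \<in> E \<and> e \<noteq> a \<and> a \<inter> e \<noteq> {}" using ef by (simp add: insert_commute Int_commute)
    then show ?thesis by blast
  qed
qed

lemma struct:
  assumes sg: "simple_graph V E" and tf: "triangle_free V E" and cb: "cubic V E" and aE: "a \<in> E"
  shows "\<exists>x1 x2 x3 x4. cyc4 E a x1 x2 x3 x4"
proof -
  obtain u v where uv: "u \<noteq> v" "u \<in> V" "v \<in> V" "a = {u,v}"
    using sg aE unfolding simple_graph_def by blast
  have cu: "card {g\<in>E. u \<in> g} = 3" using cb uv unfolding cubic_def by blast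
  have "a \<in> {g\<in>E. u \<in> g}" using aE uv by simp
  then obtain a1 a2 where A: "{g\<in>E. u \<in> g} = {a,a1,a2}" "a1 \<noteq> a2" "a1 \<noteq> a" "a2 \<noteq> a"
    by (rule card3_elim[OF cu])
  have cv: "card {g\<in>E. v \<in> g} = 3" using cb uv unfolding cubic_def by blast
  have "a \<in> {g\<in>E. v \<in> g}" using aE uv by simp
  then obtain b1 b2 where B: "{g\<in>E. v \<in> g} = {a,b1,b2}" "b1 \<noteq> b2" "b1 \<noteq> a" "b2 \<noteq> a"
    by (rule card3_elim[OF cv])
  have "a1 \<in> {g\<in>E. u \<in> g}" "a2 \<in> {g\<in>E. u \<in> g}" unfolding A(1) by simp_all
  then have a1: "a1 \<in> E" "u \<in> a1" and a2: "a2 \<in> E" "u \<in> a2" by simp_all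
  have "b1 \<in> {g\<in>E. v \<in> g}" "b2 \<in> {g\<in>E. v \<in> g}" unfolding B(1) by simp_all
  then have b1: "b1 \<in> E" "v \<in> b1" and b2: "b2 \<in> E" "v \<in> b2" by simp_all
  have d11: "a1 \<inter> b1 = {}" by (rule disj_ab[OF sg tf uv(4,1) aE a1 A(3) b1 B(3)])
  have d12: "a1 \<inter> b2 = {}" by (rule disj_ab[OF sg tf uv(4,1) aE a1 A(3) b2 B(4)])
  have d21: "a2 \<inter> b1 = {}" by (rule disj_ab[OF sg tf uv(4,1) aE a2 A(4) b1 B(3)])
  have d22: "a2 \<inter> b2 = {}" by (rule disj_ab[OF sg tf uv(4,1) aE a2 A(4) b2 B(4)])
  have n11: "a1 \<noteq> b1" using d11 a1 by blast
  have n12: "a1 \<noteq> b2" using d12 a1 by blast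
  have n21: "a2 \<noteq> b1" using d21 a2 by blast
  have n22: "a2 \<noteq> b2" using d22 b2 by blast
  have ia1: "a \<inter> a1 \<noteq> {}" "a \<inter> a2 \<noteq> {}" "a \<inter> b1 \<noteq> {}" "a \<inter> b2 \<noteq> {}"
    using uv a1 a2 b1 b2 by auto
  have iaa: "a1 \<inter> a2 \<noteq> {}" "b1 \<inter> b2 \<noteq> {}" using a1 a2 b1 b2 by auto
  define x1 where "x1 = {a,a1}"
  define x2 where "x2 = {a,b1}"
  define x3 where "x3 = {a,a2}"
  define x4 where "x4 = {a,b2}"
  have dist: "distinct [x1,x2,x3,x4]"
    unfolding x1_def x2_def x3_def x4_def
    using A(2-4) B(2-4) n11 n12 n21 n22 by (auto simp: doubleton_eq_iff)
  have Xv: "Xv E a = {x1,x2,x3,x4}"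
  proof
    show "Xv E a \<subseteq> {x1,x2,x3,x4}"
    proof
      fix w assume "w \<in> Xv E a"
      then have "w \<in> LE E" "a \<in> w" unfolding Xv_def by auto
      then have "\<exists>g. w = {a,g} \<and> g \<in> E \<and> g \<noteq> a \<and> a \<inter> g \<noteq> {}" by (rule LE_with)
      then obtain g where g0: "w = {a,g} \<and> g \<in> E \<and> g \<noteq> a \<and> a \<inter> g \<noteq> {}"
        by (rule exE)
      have g: "w = {a,g}" "g \<in> E" "g \<noteq> a" "a \<inter> g \<noteq> {}" using g0 by simp_all
      have "u \<in> g \<or> v \<in> g" using uv(4) g(4) by blast
      then have "g \<in> {g\<in>E. u \<in> g} \<or> g \<in> {g\<in>E. v \<in> g}" using g(2) by simp
      then have "g \<in> {a,a1,a2} \<or> g \<in> {a,b1,b2}" unfolding A(1) B(1) .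
      then have "g = a1 \<or> g = a2 \<or> g = b1 \<or> g = b2" using g(3) by simp
      then show "w \<in> {x1,x2,x3,x4}" unfolding x1_def x2_def x3_def x4_def using g(1) by (elim disjE) simp_all
    qed
  next
    have "x1 \<in> LE E" "x2 \<in> LE E" "x3 \<in> LE E" "x4 \<in> LE E"
      unfolding x1_def x2_def x3_def x4_def
      using aE a1 a2 b1 b2 A(3,4) B(3,4) ia1 by (auto intro!: LE_memI)
    then show "{x1,x2,x3,x4} \<subseteq> Xv E a" unfolding Xv_def x1_def x2_def x3_def x4_def by auto
  qed
  have P12: "{x1,x2} \<in> L2_edges E" unfolding x1_def x2_def
    using L2_pair[OF aE a1(1) b1(1) A(3) B(3) n11 ia1(1) ia1(3)] d11 by simp
  have P23: "{x2,x3} \<in> L2_edges E" unfolding x2_def x3_def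
    using L2_pair[OF aE b1(1) a2(1) B(3) A(4) n21[symmetric] ia1(3) ia1(2)] d21 by (simp add: Int_commute)
  have P34: "{x3,x4} \<in> L2_edges E" unfolding x3_def x4_def
    using L2_pair[OF aE a2(1) b2(1) A(4) B(4) n22 ia1(2) ia1(4)] d22 by simp
  have P41: "{x4,x1} \<in> L2_edges E" unfolding x4_def x1_def
    using L2_pair[OF aE b2(1) a1(1) B(4) A(3) n12[symmetric] ia1(4) ia1(1)] d12 by (simp add: Int_commute)
  have N13: "{x1,x3} \<notin> L2_edges E" unfolding x1_def x3_def
    using L2_pair[OF aE a1(1) a2(1) A(3) A(4) A(2) ia1(1) ia1(2)] iaa by simp
  have N24: "{x2,x4} \<notin> L2_edges E" unfolding x2_def x4_def
    using L2_pair[OF aE b1(1) b2(1) B(3) B(4) B(2) ia1(3) ia1(4)] iaa by simp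
  have Xe: "Xe E a = {{x1,x2},{x2,x3},{x3,x4},{x4,x1}}"
  proof
    show "Xe E a \<subseteq> {{x1,x2},{x2,x3},{x3,x4},{x4,x1}}"
    proof
      fix f assume f: "f \<in> Xe E a"
      then have fL: "f \<in> L2_edges E" and fs: "f \<subseteq> Xv E a" unfolding Xe_def by auto
      obtain w w' where ww: "f = {w,w'}" "w \<noteq> w'" by (rule twosetsE[OF twosets_L2 fL])
      have "w \<in> f" "w' \<in> f" unfolding ww(1) by simp_all
      then have "w \<in> {x1,x2,x3,x4}" "w' \<in> {x1,x2,x3,x4}" using fs unfolding Xv by blast+
      then have w: "w = x1 \<or> w = x2 \<or> w = x3 \<or> w = x4" and w': "w' = x1 \<or> w' = x2 \<or> w' = x3 \<or> w' = x4"
        by simp_all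
      have N31: "{x3,x1} \<notin> L2_edges E" using N13 by (simp add: insert_commute)
      have N42: "{x4,x2} \<notin> L2_edges E" using N24 by (simp add: insert_commute)
      show "f \<in> {{x1,x2},{x2,x3},{x3,x4},{x4,x1}}"
        using w w' ww fL N13 N24 N31 N42 by (elim disjE) (simp_all add: insert_commute)
    qed
  next
    show "{{x1,x2},{x2,x3},{x3,x4},{x4,x1}} \<subseteq> Xe E a"
      unfolding Xe_def using P12 P23 P34 P41 Xv by auto
  qed
  show ?thesis unfolding cyc4_def using dist Xv Xe by blast
qed



lemma valid_at:
  assumes v: "valid_labeling E lam" and eE: "e \<in> E" and x: "x \<in> Xv E e"
    and ab: "\<And>f. f \<in> Xe E e \<Longrightarrow> x \<in> f \<Longrightarrow> f = A \<or> f = B"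
  shows "lam A \<noteq> lam B"
proof -
  obtain f1 f2 where f: "f1 \<in> Xe E e" "f2 \<in> Xe E e" "x \<in> f1" "x \<in> f2" "lam f1 \<noteq> lam f2"
    using v eE x unfolding valid_labeling_def by blast
  have "f1 = A \<or> f1 = B" "f2 = A \<or> f2 = B" using ab f by auto
  then show ?thesis using f(5) by auto
qed

lemma cyc4D:
  assumes "cyc4 E e x1 x2 x3 x4"
  shows "x1 \<noteq> x2" "x1 \<noteq> x3" "x1 \<noteq> x4" "x2 \<noteq> x3" "x2 \<noteq> x4" "x3 \<noteq> x4"
    "Xv E e = {x1,x2,x3,x4}" "Xe E e = {{x1,x2},{x2,x3},{x3,x4},{x4,x1}}"
  using assms unfolding cyc4_def by auto

lemma cyc4_rot: "cyc4 E e x1 x2 x3 x4 \<Longrightarrow> cyc4 E e x2 x3 x4 x1"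
  unfolding cyc4_def by (auto simp: insert_commute)

lemma Xe_L2: "Xe E e \<subseteq> L2_edges E" unfolding Xe_def by auto

lemma Xv_LE: "Xv E e \<subseteq> LE E" unfolding Xv_def by auto

lemma alt:
  assumes v: "valid_labeling E lam" and eE: "e \<in> E" and c: "cyc4 E e x1 x2 x3 x4"
  shows "(lam {x1,x2} = 1 \<and> lam {x2,x3} = 0 \<and> lam {x3,x4} = 1 \<and> lam {x4,x1} = 0) \<or>
         (lam {x1,x2} = 0 \<and> lam {x2,x3} = 1 \<and> lam {x3,x4} = 0 \<and> lam {x4,x1} = 1)"
proof -
  note d = cyc4D[OF c]
  have L: "{x1,x2} \<in> L2_edges E" "{x2,x3} \<in> L2_edges E" "{x3,x4} \<in> L2_edges E" "{x4,x1} \<in> L2_edges E"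
    using Xe_L2[of E e] d(8) by auto
  have b: "lam {x1,x2} \<in> {0,1}" "lam {x2,x3} \<in> {0,1}" "lam {x3,x4} \<in> {0,1}" "lam {x4,x1} \<in> {0,1}"
    using v L unfolding valid_labeling_def by blast+
  have "lam {x1,x2} \<noteq> lam {x2,x3}"
    by (rule valid_at[OF v eE, of x2]) (unfold d(7,8), insert d(1-6), blast+)
  moreover have "lam {x2,x3} \<noteq> lam {x3,x4}"
    by (rule valid_at[OF v eE, of x3]) (unfold d(7,8), insert d(1-6), blast+)
  moreover have "lam {x3,x4} \<noteq> lam {x4,x1}"
    by (rule valid_at[OF v eE, of x4]) (unfold d(7,8), insert d(1-6), blast+)
  ultimately show ?thesis using b by auto
qed

lemma card1:
  assumes "Q \<in> S" "P Q" "\<forall>f\<in>S. P f \<longrightarrow> f = Q"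
  shows "card {f\<in>S. P f} = 1"
proof -
  have "{f\<in>S. P f} = {Q}" using assms by blast
  then show ?thesis by simp
qed

lemma open_clique_card:
  assumes v: "valid_labeling E lam" and eE: "e \<in> E" and c: "cyc4 E e x1 x2 x3 x4"
    and w: "w \<in> Xv E e"
  shows "card {f\<in>Xe E e. lam f = 1 \<and> w \<in> f} = 1"
proof -
  note d = cyc4D[OF c]
  have w4: "w = x1 \<or> w = x2 \<or> w = x3 \<or> w = x4" using w d(7) by simp
  from alt[OF v eE c] show ?thesis
  proof
    assume l: "lam {x1,x2} = 1 \<and> lam {x2,x3} = 0 \<and> lam {x3,x4} = 1 \<and> lam {x4,x1} = 0"
    from w4 show ?thesis
    proof (elim disjE)
      assume "w = x1" then show ?thesis unfolding d(8) using l d(1-6) by (intro card1[of "{x1,x2}"]) simp_all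
    next
      assume "w = x2" then show ?thesis unfolding d(8) using l d(1-6) by (intro card1[of "{x1,x2}"]) simp_all
    next
      assume "w = x3" then show ?thesis unfolding d(8) using l d(1-6) by (intro card1[of "{x3,x4}"]) simp_all
    next
      assume "w = x4" then show ?thesis unfolding d(8) using l d(1-6) by (intro card1[of "{x3,x4}"]) simp_all
    qed
  next
    assume l: "lam {x1,x2} = 0 \<and> lam {x2,x3} = 1 \<and> lam {x3,x4} = 0 \<and> lam {x4,x1} = 1"
    from w4 show ?thesis
    proof (elim disjE)
      assume "w = x1" then show ?thesis unfolding d(8) using l d(1-6) by (intro card1[of "{x4,x1}"]) simp_all
    next
      assume "w = x2" then show ?thesis unfolding d(8) using l d(1-6) by (intro card1[of "{x2,x3}"]) simp_all
    next
      assume "w = x3" then show ?thesis unfolding d(8) using l d(1-6) by (intro card1[of "{x2,x3}"]) simp_all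
    next
      assume "w = x4" then show ?thesis unfolding d(8) using l d(1-6) by (intro card1[of "{x4,x1}"]) simp_all
    qed
  qed
qed



lemma in_Xv: "w \<in> LE E \<Longrightarrow> g \<in> w \<Longrightarrow> w \<in> Xv E g"
  unfolding Xv_def by simp

lemma open_L2: "open_edges E lam \<subseteq> L2_edges E" unfolding open_edges_def by auto

lemma deg2:
  assumes sg: "simple_graph V E" and tf: "triangle_free V E" and cb: "cubic V E"
    and v: "valid_labeling E lam" and w: "w \<in> LE E"
  shows "card {f\<in>open_edges E lam. w \<in> f} = 2"
proof -
  obtain g h where gh: "w = {g,h}" "g \<noteq> h" by (rule twosetsE[OF twosets_LE w])
  have gE: "g \<in> E" "h \<in> E" using LE_memD[of g h E] w gh by auto
  have wg: "w \<in> Xv E g" "w \<in> Xv E h" using w gh by (auto intro: in_Xv)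
  let ?A = "{f\<in>Xe E g. lam f = 1 \<and> w \<in> f}" and ?B = "{f\<in>Xe E h. lam f = 1 \<and> w \<in> f}"
  have eq: "{f\<in>open_edges E lam. w \<in> f} = ?A \<union> ?B"
  proof
    show "{f\<in>open_edges E lam. w \<in> f} \<subseteq> ?A \<union> ?B"
    proof
      fix f assume f: "f \<in> {f\<in>open_edges E lam. w \<in> f}"
      then have fL: "f \<in> L2_edges E" and l: "lam f = 1" and wf: "w \<in> f" unfolding open_edges_def by auto
      obtain p q where pq: "f = {p,q}" "p \<noteq> q" by (rule twosetsE[OF twosets_L2 fL])
      obtain z where z: "z \<in> f" "z \<noteq> w" using pq by blast
      have fwz: "f = {w,z}" using pq wf z by blast
      have "f \<in> LE (LE E)" using fL L2_sub by blast
      then have zL: "z \<in> LE E" "w \<inter> z \<noteq> {}" using LE_memD[of w z "LE E"] fwz by auto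
      then have "g \<in> z \<or> h \<in> z" using gh by blast
      then show "f \<in> ?A \<union> ?B"
      proof
        assume "g \<in> z"
        then have "f \<subseteq> Xv E g" using fwz wg(1) in_Xv[OF zL(1)] by simp
        then show ?thesis using fL l wf unfolding Xe_def by simp
      next
        assume "h \<in> z"
        then have "f \<subseteq> Xv E h" using fwz wg(2) in_Xv[OF zL(1)] by simp
        then show ?thesis using fL l wf unfolding Xe_def by simp
      qed
    qed
  next
    show "?A \<union> ?B \<subseteq> {f\<in>open_edges E lam. w \<in> f}"
      using Xe_L2 unfolding open_edges_def by blast
  qed
  have disj: "?A \<inter> ?B = {}"
  proof (rule ccontr)
    assume "?A \<inter> ?B \<noteq> {}"
    then obtain f where f: "f \<in> Xe E g" "f \<in> Xe E h" "w \<in> f" by blast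
    then have fL: "f \<in> L2_edges E" unfolding Xe_def by auto
    obtain p q where pq: "f = {p,q}" "p \<noteq> q" by (rule twosetsE[OF twosets_L2 fL])
    obtain z where z: "z \<in> f" "z \<noteq> w" using pq by auto
    have "z \<in> Xv E g" "z \<in> Xv E h" using f z unfolding Xe_def by auto
    then have zz: "z \<in> LE E" "g \<in> z" "h \<in> z" unfolding Xv_def by auto
    obtain s t where st: "z = {s,t}" "s \<noteq> t" by (rule twosetsE[OF twosets_LE zz(1)])
    have "z = w" using st zz(2,3) gh by auto
    then show False using z by simp
  qed
  obtain y1 y2 y3 y4 where cg: "cyc4 E g y1 y2 y3 y4" using struct[OF sg tf cb gE(1)] by blast
  obtain z1 z2 z3 z4 where ch: "cyc4 E h z1 z2 z3 z4" using struct[OF sg tf cb gE(2)] by blast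
  have "card ?A = 1" by (rule open_clique_card[OF v gE(1) cg wg(1)])
  moreover have "card ?B = 1" by (rule open_clique_card[OF v gE(2) ch wg(2)])
  moreover have "finite ?A" "finite ?B" using calculation by (auto intro: card_ge_0_finite)
  ultimately show ?thesis unfolding eq using disj by (simp add: card_Un_disjoint)
qed

lemma cmp_open:
  assumes "x \<in> \<Union>F" shows "{y \<in> \<Union>F. reach F x y} = cmp F x"
proof
  show "cmp F x \<subseteq> {y \<in> \<Union>F. reach F x y}"
  proof
    fix y assume "y \<in> cmp F x"
    then have r: "reach F x y" by (simp add: cmp_def)
    then have "y \<in> \<Union>F" using assms reach_endpoint[OF r] by (cases "y = x") auto
    then show "y \<in> {y \<in> \<Union>F. reach F x y}" using r by simp
  qed
qed (auto simp: cmp_def)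

lemma Gamma_iff: "\<gamma> \<in> Gamma E lam \<longleftrightarrow> (\<exists>x\<in>\<Union>(open_edges E lam). \<gamma> = cmp (open_edges E lam) x)"
proof
  assume "\<gamma> \<in> Gamma E lam"
  then obtain x where x: "x \<in> \<Union>(open_edges E lam)"
    "\<gamma> = {y \<in> \<Union>(open_edges E lam). reach (open_edges E lam) x y}"
    unfolding Gamma_def by blast
  then show "\<exists>x\<in>\<Union>(open_edges E lam). \<gamma> = cmp (open_edges E lam) x" using cmp_open[OF x(1)] by metis
next
  assume "\<exists>x\<in>\<Union>(open_edges E lam). \<gamma> = cmp (open_edges E lam) x"
  then obtain x where x: "x \<in> \<Union>(open_edges E lam)" "\<gamma> = cmp (open_edges E lam) x" by blast
  then have "\<gamma> = {y \<in> \<Union>(open_edges E lam). reach (open_edges E lam) x y}" using cmp_open[OF x(1)] by simp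
  then show "\<gamma> \<in> Gamma E lam" unfolding Gamma_def using x(1) by blast
qed



lemma neq_by: "x \<in> A \<Longrightarrow> x \<notin> B \<Longrightarrow> A \<noteq> B" by blast

lemma filter_ins: "{f\<in>insert a S. P f} = (if P a then insert a {f\<in>S. P f} else {f\<in>S. P f})"
  by auto

lemma Un_Diff_disj: "X \<inter> Y = {} \<Longrightarrow> X \<union> Y - Y = X" by blast

lemma split_filter: "S \<subseteq> O' \<Longrightarrow> {f\<in>O'. P f} = {f\<in>O' - S. P f} \<union> {f\<in>S. P f}" by blast

lemma split_disj: "{f\<in>O' - S. P f} \<inter> {f\<in>S. P f} = {}" by blast

lemma filt2a: "w \<in> A \<Longrightarrow> w \<notin> C \<Longrightarrow> card {f\<in>{A,C}. w \<in> f} = 1"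
proof -
  assume "w \<in> A" "w \<notin> C"
  then have "{f\<in>{A,C}. w \<in> f} = {A}" by blast
  then show ?thesis by simp
qed

lemma filt2c: "w \<notin> A \<Longrightarrow> w \<in> C \<Longrightarrow> card {f\<in>{A,C}. w \<in> f} = 1"
proof -
  assume "w \<notin> A" "w \<in> C"
  then have "{f\<in>{A,C}. w \<in> f} = {C}" by blast
  then show ?thesis by simp
qed

lemma filt2n: "w \<notin> A \<Longrightarrow> w \<notin> C \<Longrightarrow> card {f\<in>{A,C}. w \<in> f} = 0"
proof -
  assume "w \<notin> A" "w \<notin> C"
  then have "{f\<in>{A,C}. w \<in> f} = {}" by blast
  then show ?thesis by simp
qed

locale fctx =
  fixes V :: "'v set" and E :: "'v set set" and lam :: "'v labeling" and e :: "'v set"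
    and x1 x2 x3 x4 :: "'v set set"
  assumes sg: "simple_graph V E" and tf: "triangle_free V E" and cb: "cubic V E"
    and v: "valid_labeling E lam" and eE: "e \<in> E" and c: "cyc4 E e x1 x2 x3 x4"
    and l12: "lam {x1,x2} = 1" and l23: "lam {x2,x3} = 0"
    and l34: "lam {x3,x4} = 1" and l41: "lam {x4,x1} = 0"
begin

abbreviation "OE \<equiv> open_edges E lam"
abbreviation "R \<equiv> OE - {{x1,x2},{x3,x4}}"
abbreviation "N \<equiv> open_edges E (flip E e lam)"

lemmas d = cyc4D[OF c]

lemma pd: "{x1,x2} \<noteq> {x2,x3}" "{x1,x2} \<noteq> {x3,x4}" "{x1,x2} \<noteq> {x4,x1}"
    "{x2,x3} \<noteq> {x3,x4}" "{x2,x3} \<noteq> {x4,x1}" "{x3,x4} \<noteq> {x4,x1}"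
proof -
  show "{x1,x2} \<noteq> {x2,x3}" by (rule neq_by[of x1]) (use d in simp_all)
  show "{x1,x2} \<noteq> {x3,x4}" by (rule neq_by[of x1]) (use d in simp_all)
  show "{x1,x2} \<noteq> {x4,x1}" by (rule neq_by[of x2]) (use d in simp_all)
  show "{x2,x3} \<noteq> {x3,x4}" by (rule neq_by[of x2]) (use d in simp_all)
  show "{x2,x3} \<noteq> {x4,x1}" by (rule neq_by[of x2]) (use d in simp_all)
  show "{x3,x4} \<noteq> {x4,x1}" by (rule neq_by[of x3]) (use d in simp_all)
qed

lemma XeL: "{x1,x2} \<in> Xe E e" "{x2,x3} \<in> Xe E e" "{x3,x4} \<in> Xe E e" "{x4,x1} \<in> Xe E e"
  using d(8) by simp_all

lemma L2: "{x1,x2} \<in> L2_edges E" "{x2,x3} \<in> L2_edges E" "{x3,x4} \<in> L2_edges E" "{x4,x1} \<in> L2_edges E"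
  using XeL Xe_L2 by blast+

lemma inO: "{x1,x2} \<in> OE" "{x3,x4} \<in> OE" "{x2,x3} \<notin> OE" "{x4,x1} \<notin> OE"
  unfolding open_edges_def using L2 l12 l23 l34 l41 by simp_all

lemma fl: "flip E e lam {x1,x2} = 0" "flip E e lam {x2,x3} = 1"
  "flip E e lam {x3,x4} = 0" "flip E e lam {x4,x1} = 1"
  unfolding flip_def using XeL l12 l23 l34 l41 by simp_all

lemma N_eq: "N = R \<union> {{x2,x3},{x4,x1}}"
proof (rule set_eqI)
  fix f
  show "f \<in> N \<longleftrightarrow> f \<in> R \<union> {{x2,x3},{x4,x1}}"
  proof (cases "f \<in> Xe E e")
    case True
    then have "f = {x1,x2} \<or> f = {x2,x3} \<or> f = {x3,x4} \<or> f = {x4,x1}" using d(8) by simp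
    then show ?thesis
    proof (elim disjE)
      assume f: "f = {x1,x2}" show ?thesis unfolding f open_edges_def using fl pd by simp
    next
      assume f: "f = {x2,x3}" show ?thesis unfolding f open_edges_def using fl pd L2 by simp
    next
      assume f: "f = {x3,x4}" show ?thesis unfolding f open_edges_def using fl pd by simp
    next
      assume f: "f = {x4,x1}" show ?thesis unfolding f open_edges_def using fl pd L2 by simp
    qed
  next
    case False
    then have "f \<noteq> {x1,x2}" "f \<noteq> {x2,x3}" "f \<noteq> {x3,x4}" "f \<noteq> {x4,x1}" using XeL by auto
    moreover have "flip E e lam f = lam f" unfolding flip_def using False by simp
    ultimately show ?thesis unfolding open_edges_def by simp
  qed
qed

lemma BD_notR: "{x2,x3} \<notin> R" "{x4,x1} \<notin> R" using inO by simp_all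

lemma N_minus: "N - {{x2,x3},{x4,x1}} = R"
proof -
  have "R \<inter> {{x2,x3},{x4,x1}} = {}" by (simp only: Int_insert_right BD_notR if_False Int_empty_right)
  then show ?thesis unfolding N_eq by (rule Un_Diff_disj)
qed

lemma R_sub_N: "R \<subseteq> N" unfolding N_eq by (rule Un_upper1)

lemma finE: "finite E" by (rule finite_E[OF sg])

lemma finO: "finite OE" by (rule finite_subset[OF open_L2 finite_L2[OF finE]])

lemma finR: "finite R" by (rule finite_Diff[OF finO])

lemma tsR: "twosets R" by (rule twosets_mono[OF twosets_L2 subset_trans[OF Diff_subset open_L2]])

lemma xLE: "x1 \<in> LE E" "x2 \<in> LE E" "x3 \<in> LE E" "x4 \<in> LE E"
proof -
  have "x1 \<in> Xv E e" "x2 \<in> Xv E e" "x3 \<in> Xv E e" "x4 \<in> Xv E e" unfolding d(7) by simp_all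
  then show "x1 \<in> LE E" "x2 \<in> LE E" "x3 \<in> LE E" "x4 \<in> LE E" using Xv_LE by blast+
qed

lemma RLE: "w \<in> \<Union>R \<Longrightarrow> w \<in> LE E"
proof -
  assume "w \<in> \<Union>R"
  then obtain f where "f \<in> R" "w \<in> f" by (rule UnionE)
  then have "f \<in> L2_edges E" using open_L2 by blast
  then show ?thesis using \<open>w \<in> f\<close> by (rule L2_vert)
qed

lemma degR:
  assumes w: "w \<in> LE E"
  shows "card {f\<in>R. w \<in> f} = (if w \<in> {x1,x2,x3,x4} then 1 else 2)"
proof -
  have sub: "{{x1,x2},{x3,x4}} \<subseteq> OE" by (simp only: insert_subset inO empty_subsetI simp_thms)
  have eq: "{f\<in>OE. w \<in> f} = {f\<in>R. w \<in> f} \<union> {f\<in>{{x1,x2},{x3,x4}}. w \<in> f}"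
    by (rule split_filter[OF sub])
  have dj: "{f\<in>R. w \<in> f} \<inter> {f\<in>{{x1,x2},{x3,x4}}. w \<in> f} = {}" by (rule split_disj)
  have f1: "finite {f\<in>R. w \<in> f}" using finR by (rule finite_subset[rotated]) blast
  have c2: "card {f\<in>{{x1,x2},{x3,x4}}. w \<in> f} = (if w \<in> {x1,x2,x3,x4} then 1 else 0)"
  proof (cases "w \<in> {x1,x2}")
    case True
    have n34: "w \<notin> {x3,x4}" using True d(1-6) by blast
    show ?thesis unfolding filt2a[OF True n34] using True by auto
  next
    case F: False
    show ?thesis
    proof (cases "w \<in> {x3,x4}")
      case True
      then show ?thesis unfolding filt2c[OF F True] using True by auto
    next
      case False
      then show ?thesis unfolding filt2n[OF F False] using F by auto
    qed
  qed
  have "card {f\<in>OE. w \<in> f} = 2" by (rule deg2[OF sg tf cb v w])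
  moreover have "card {f\<in>OE. w \<in> f} = card {f\<in>R. w \<in> f} + card {f\<in>{{x1,x2},{x3,x4}}. w \<in> f}"
  proof -
    have f2: "finite {f\<in>{{x1,x2},{x3,x4}}. w \<in> f}" by (rule finite_subset[of _ "{{x1,x2},{x3,x4}}"]) auto
    show ?thesis unfolding eq using card_Un_disjoint[OF f1 f2 dj] .
  qed
  ultimately have "card {f\<in>R. w \<in> f} + card {f\<in>{{x1,x2},{x3,x4}}. w \<in> f} = 2" by linarith
  then show ?thesis
  proof (cases "w \<in> {x1,x2,x3,x4}")
    case True
    have "card {f\<in>{{x1,x2},{x3,x4}}. w \<in> f} = 1" using c2 unfolding if_P[OF True] .
    then show ?thesis using \<open>_ + _ = 2\<close> unfolding if_P[OF True] by linarith
  next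
    case False
    have "card {f\<in>{{x1,x2},{x3,x4}}. w \<in> f} = 0" using c2 unfolding if_not_P[OF False] .
    then show ?thesis using \<open>_ + _ = 2\<close> unfolding if_not_P[OF False] by linarith
  qed
qed

end



lemma inter4a: "a \<in> S \<Longrightarrow> b \<notin> S \<Longrightarrow> c \<notin> S \<Longrightarrow> d \<notin> S \<Longrightarrow> S \<inter> {a,b,c,d} = {a}"
  by blast

lemma inter4c: "c \<in> S \<Longrightarrow> a \<notin> S \<Longrightarrow> b \<notin> S \<Longrightarrow> d \<notin> S \<Longrightarrow> S \<inter> {a,b,c,d} = {c}"
  by blast

lemma inter4all: "a \<in> S \<Longrightarrow> b \<in> S \<Longrightarrow> c \<in> S \<Longrightarrow> d \<in> S \<Longrightarrow> S \<inter> {a,b,c,d} = {a,b,c,d}"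
  by blast

lemma un2: "x \<in> A \<union> {b,d} \<Longrightarrow> x \<notin> A \<Longrightarrow> x = b \<or> x = d" by blast

lemma filter_diff: "{f\<in>X. P f} - Y = {f\<in>X - Y. P f}" by blast

context fctx
begin

lemma reachR_O: "reach R a b \<Longrightarrow> reach OE a b"
  by (erule reach_mono) (rule Diff_subset)

lemma reachR_N: "reach R a b \<Longrightarrow> reach N a b"
  by (erule reach_mono) (rule R_sub_N)

lemma cmpR_LE: "y \<in> cmp R x \<Longrightarrow> x \<in> LE E \<Longrightarrow> y \<in> LE E"
proof -
  assume y: "y \<in> cmp R x" and x: "x \<in> LE E"
  show ?thesis
  proof (cases "y = x")
    case True then show ?thesis using x by simp
  next
    case False
    have "reach R x y" using y by (simp add: cmp_def)
    from reach_endpoint[OF this] False have "y \<in> \<Union>R" by simp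
    then show ?thesis by (rule RLE)
  qed
qed

lemma deg_sum:
  assumes x: "x \<in> LE E" and X: "cmp R x \<inter> {x1,x2,x3,x4} = X"
  shows "2 * card {f\<in>R. f \<subseteq> cmp R x} + card X = 2 * card (cmp R x)"
proof -
  let ?C = "cmp R x"
  have finC: "finite ?C" by (rule finite_cmp[OF finR tsR])
  have hs: "(\<Sum>w\<in>?C. card {f\<in>R. w \<in> f}) = 2 * card {f\<in>R. f \<subseteq> ?C}"
    by (rule handshake[OF finR tsR finC]) (rule cmp_closed[OF _ tsR])
  have "(\<Sum>w\<in>?C. card {f\<in>R. w \<in> f}) = (\<Sum>w\<in>?C. if w \<in> X then 1 else 2)"
  proof (rule sum.cong)
    fix w assume w: "w \<in> ?C"
    have "w \<in> LE E" by (rule cmpR_LE[OF w x])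
    then have "card {f\<in>R. w \<in> f} = (if w \<in> {x1,x2,x3,x4} then 1 else 2)" by (rule degR)
    moreover have "(w \<in> {x1,x2,x3,x4}) = (w \<in> X)" using w X by blast
    ultimately show "card {f\<in>R. w \<in> f} = (if w \<in> X then 1 else 2)" by simp
  qed simp
  moreover have "X \<subseteq> ?C" using X by blast
  ultimately show ?thesis using sum_12[OF finC, of X] hs by simp
qed

lemma lonely:
  assumes x: "x \<in> LE E" and X: "cmp R x \<inter> {x1,x2,x3,x4} = {x}"
  shows False
proof -
  have "2 * card {f\<in>R. f \<subseteq> cmp R x} + card {x} = 2 * card (cmp R x)"
    by (rule deg_sum[OF x X])
  then show False by simp presburger
qed

lemma edgeO: "reach OE x1 x2" "reach OE x2 x1" "reach OE x3 x4" "reach OE x4 x3"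
proof -
  show a: "reach OE x1 x2" by (rule reach_edge[OF inO(1)])
  show b: "reach OE x3 x4" by (rule reach_edge[OF inO(2)])
  show "reach OE x2 x1" by (rule reach_sym[OF a])
  show "reach OE x4 x3" by (rule reach_sym[OF b])
qed

lemma edgeN: "reach N x2 x3" "reach N x3 x2" "reach N x4 x1" "reach N x1 x4"
proof -
  have n1: "{x2,x3} \<in> N" and n2: "{x4,x1} \<in> N" unfolding N_eq by simp_all
  have a: "reach N x2 x3" by (rule reach_edge[OF n1])
  have b: "reach N x4 x1" by (rule reach_edge[OF n2])
  then show "reach N x2 x3" "reach N x3 x2" "reach N x4 x1" "reach N x1 x4"
    using a b reach_sym[OF a] reach_sym[OF b] by simp_all
qed

lemma no_bridge1:
  assumes n: "\<not> reach OE x1 x3"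
  shows "reach R x1 x2"
proof (rule ccontr)
  assume n2: "\<not> reach R x1 x2"
  have n3: "\<not> reach R x1 x3" using n reachR_O by blast
  have n4: "\<not> reach R x1 x4"
  proof
    assume "reach R x1 x4"
    then have "reach OE x1 x3" using reach_trans[OF reachR_O edgeO(4)] by blast
    then show False using n by simp
  qed
  have "cmp R x1 \<inter> {x1,x2,x3,x4} = {x1}"
    by (rule inter4a) (use n2 n3 n4 in \<open>simp_all add: cmp_def\<close>)
  then show False by (rule lonely[OF xLE(1)])
qed

lemma no_bridge2:
  assumes n: "\<not> reach OE x1 x3"
  shows "reach R x3 x4"
proof (rule ccontr)
  assume n4: "\<not> reach R x3 x4"
  have n1: "\<not> reach R x3 x1"
  proof
    assume "reach R x3 x1"
    then have "reach OE x1 x3" by (rule reach_sym[OF reachR_O])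
    then show False using n by simp
  qed
  have n2: "\<not> reach R x3 x2"
  proof
    assume "reach R x3 x2"
    then have r31: "reach OE x3 x1" using reach_trans[OF reachR_O edgeO(2)] by blast
    show False using n reach_sym[OF r31] by simp
  qed
  have "cmp R x3 \<inter> {x1,x2,x3,x4} = {x3}"
    by (rule inter4c) (use n1 n2 n4 in \<open>simp_all add: cmp_def\<close>)
  then show False by (rule lonely[OF xLE(3)])
qed

lemma cut2:
  assumes r23: "reach R x2 x3" and r41: "reach R x4 x1"
  shows "\<not> reach R x2 x1"
proof
  assume r21: "reach R x2 x1"
  have r24: "reach R x2 x4" by (rule reach_trans[OF r21 reach_sym[OF r41]])
  have "cmp R x2 \<inter> {x1,x2,x3,x4} = {x1,x2,x3,x4}"
    by (rule inter4all) (use r21 r23 r24 in \<open>simp_all add: cmp_def\<close>)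
  from deg_sum[OF xLE(2) this]
  have a: "2 * card {f\<in>R. f \<subseteq> cmp R x2} + card {x1,x2,x3,x4} = 2 * card (cmp R x2)" .
  have "card {x1,x2,x3,x4} = 4" using d(1-6) by simp
  moreover have "card (cmp R x2) \<le> card {f\<in>R. f \<subseteq> cmp R x2} + 1" by (rule count_cmp[OF finR tsR])
  ultimately show False using a by linarith
qed

lemma x1N: "x1 \<in> \<Union>N" "x2 \<in> \<Union>N"
proof -
  have "{x2,x3} \<in> N" "{x4,x1} \<in> N" unfolding N_eq by simp_all
  then show "x1 \<in> \<Union>N" "x2 \<in> \<Union>N" by blast+
qed

lemma restrict_to:
  assumes r: "reach R a b" and a: "a \<in> cmp N x1"
  shows "reach (cyc_edges E (flip E e lam) (cmp N x1) - {{x2,x3},{x4,x1}}) a b"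
proof -
  have eq: "cyc_edges E (flip E e lam) (cmp N x1) - {{x2,x3},{x4,x1}} = {f\<in>R. f \<subseteq> cmp N x1}"
    unfolding cyc_edges_def filter_diff N_minus ..
  have "cmp R a \<subseteq> cmp N x1"
  proof
    fix y assume "y \<in> cmp R a"
    then have "reach N a y" using reachR_N by (simp add: cmp_def)
    moreover have "reach N x1 a" using a by (simp add: cmp_def)
    ultimately show "y \<in> cmp N x1" by (simp add: cmp_def reach_trans)
  qed
  then show ?thesis unfolding eq by (rule reach_restrict[OF r])
qed

lemma selfint:
  assumes "x2 \<in> cmp N x1" "x3 \<in> cmp N x1" "x4 \<in> cmp N x1"
  shows "self_intersection E (flip E e lam) e (cmp N x1)"
  unfolding self_intersection_def
proof (intro conjI ballI impI)
  show "cmp N x1 \<in> Gamma E (flip E e lam)" unfolding Gamma_iff using x1N(1) by blast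
next
  fix f assume f: "f \<in> Xe E e" "flip E e lam f = 1"
  then have "f = {x1,x2} \<or> f = {x2,x3} \<or> f = {x3,x4} \<or> f = {x4,x1}" using d(8) by simp
  then have "f = {x2,x3} \<or> f = {x4,x1}" using f(2) fl by auto
  moreover have "x1 \<in> cmp N x1" by (simp add: cmp_def)
  ultimately show "f \<subseteq> cmp N x1" using assms by blast
qed

lemma core_a:
  assumes n: "\<not> reach OE x1 x3"
  shows "typeB E (flip E e lam) e"
proof -
  have r12: "reach R x1 x2" by (rule no_bridge1[OF n])
  have r34: "reach R x3 x4" by (rule no_bridge2[OF n])
  have c2: "x2 \<in> cmp N x1" using reachR_N[OF r12] by (simp add: cmp_def)
  have c3: "x3 \<in> cmp N x1" using reach_trans[OF reachR_N[OF r12] edgeN(1)] by (simp add: cmp_def)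
  have c4: "x4 \<in> cmp N x1" using edgeN by (simp add: cmp_def)
  have c1: "x1 \<in> cmp N x1" by (simp add: cmp_def)
  show ?thesis unfolding typeB_def
    apply (rule exI[of _ "cmp N x1"])
    apply (rule conjI[OF selfint[OF c2 c3 c4]])
    apply (rule exI[of _ x2], rule exI[of _ x3], rule exI[of _ x4], rule exI[of _ x1])
    using cyc4_rot[OF c] fl restrict_to[OF r34 c3] restrict_to[OF r12 c1] by simp
qed

lemma core_b:
  assumes r23: "reach R x2 x3" and r41: "reach R x4 x1"
  shows "\<exists>\<gamma>1\<in>Gamma E (flip E e lam). \<exists>\<gamma>2\<in>Gamma E (flip E e lam). \<gamma>1 \<noteq> \<gamma>2 \<and>
             (\<exists>f1\<in>Xe E e. \<exists>f2\<in>Xe E e. f1 \<noteq> f2 \<and>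
                flip E e lam f1 = 1 \<and> flip E e lam f2 = 1 \<and> f1 \<subseteq> \<gamma>1 \<and> f2 \<subseteq> \<gamma>2)"
proof -
  have nR: "\<not> reach R x2 x1" by (rule cut2[OF r23 r41])
  have nN: "\<not> reach N x2 x1"
  proof
    assume "reach N x2 x1"
    then have "reach R x2 x1"
    proof (rule reach_cover)
      fix p q assume pq: "{p,q} \<in> N"
      show "reach R p q"
      proof (cases "{p,q} \<in> R")
        case True then show ?thesis by (rule reach_edge)
      next
        case False
        have "{p,q} = {x2,x3} \<or> {p,q} = {x4,x1}" by (rule un2[OF pq[unfolded N_eq] False])
        then have "(p = x2 \<and> q = x3) \<or> (p = x3 \<and> q = x2) \<or> (p = x4 \<and> q = x1) \<or> (p = x1 \<and> q = x4)"
          by (simp only: doubleton_eq_iff) blast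
        then show ?thesis using r23 r41 reach_sym[OF r23] reach_sym[OF r41] by (elim disjE) simp_all
      qed
    qed
    then show False using nR by simp
  qed
  have g1: "cmp N x2 \<in> Gamma E (flip E e lam)" unfolding Gamma_iff using x1N(2) by blast
  have g2: "cmp N x1 \<in> Gamma E (flip E e lam)" unfolding Gamma_iff using x1N(1) by blast
  have ne: "cmp N x2 \<noteq> cmp N x1" using nN by (auto simp: cmp_def)
  have s1: "{x2,x3} \<subseteq> cmp N x2" using edgeN by (simp add: cmp_def)
  have s2: "{x4,x1} \<subseteq> cmp N x1" using edgeN by (simp add: cmp_def)
  show ?thesis
  proof (rule bexI[OF _ g1], rule bexI[OF _ g2], intro conjI)
    show "cmp N x2 \<noteq> cmp N x1" by (rule ne)
    show "\<exists>f1\<in>Xe E e. \<exists>f2\<in>Xe E e. f1 \<noteq> f2 \<and> flip E e lam f1 = 1 \<and> flip E e lam f2 = 1 \<and>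
       f1 \<subseteq> cmp N x2 \<and> f2 \<subseteq> cmp N x1"
      by (rule bexI[OF _ XeL(2)], rule bexI[OF _ XeL(4)], intro conjI) (rule pd(5) fl(2) fl(4) s1 s2)+
  qed
qed

lemma core_c:
  assumes r13: "reach R x1 x3" and r24: "reach R x2 x4"
  shows "typeA E (flip E e lam) e"
proof -
  have c4: "x4 \<in> cmp N x1" using edgeN by (simp add: cmp_def)
  have c2: "x2 \<in> cmp N x1" using reach_trans[OF edgeN(4) reach_sym[OF reachR_N[OF r24]]] by (simp add: cmp_def)
  have c3: "x3 \<in> cmp N x1" using reachR_N[OF r13] by (simp add: cmp_def)
  have r31: "reach R x3 x1" by (rule reach_sym[OF r13])
  show ?thesis unfolding typeA_def
    apply (rule exI[of _ "cmp N x1"])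
    apply (rule conjI[OF selfint[OF c2 c3 c4]])
    apply (rule exI[of _ x2], rule exI[of _ x3], rule exI[of _ x4], rule exI[of _ x1])
    using cyc4_rot[OF c] fl restrict_to[OF r24 c2] restrict_to[OF r31 c3] by simp
qed

lemma in_Gamma_comp:
  assumes g: "\<gamma> \<in> Gamma E lam" and f: "f \<in> Xe E e" "lam f = 1" "f \<subseteq> \<gamma>" and r: "reach OE x1 x3"
  shows "\<gamma> = cmp OE x1"
proof -
  obtain c where c: "\<gamma> = cmp OE c" using g unfolding Gamma_iff by blast
  have "f = {x1,x2} \<or> f = {x2,x3} \<or> f = {x3,x4} \<or> f = {x4,x1}" using f(1) d(8) by simp
  then have "f = {x1,x2} \<or> f = {x3,x4}" using f(2) l23 l41 by auto
  then obtain z where z: "z \<in> \<gamma>" "reach OE x1 z"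
  proof
    assume "f = {x1,x2}" then show ?thesis using that[of x1] f(3) by simp
  next
    assume "f = {x3,x4}" then show ?thesis using that[of x3] f(3) r by simp
  qed
  have "reach OE c z" using z c by (simp add: cmp_def)
  then have "cmp OE c = cmp OE z" by (rule cmp_eq)
  also have "\<dots> = cmp OE x1" using cmp_eq[OF z(2)] by simp
  finally show ?thesis using c by simp
qed

lemma a_hyp:
  assumes "\<exists>\<gamma>1\<in>Gamma E lam. \<exists>\<gamma>2\<in>Gamma E lam. \<gamma>1 \<noteq> \<gamma>2 \<and>
             (\<exists>f\<in>Xe E e. lam f = 1 \<and> f \<subseteq> \<gamma>1) \<and> (\<exists>f\<in>Xe E e. lam f = 1 \<and> f \<subseteq> \<gamma>2)"
  shows "typeB E (flip E e lam) e"
proof (rule core_a, rule notI)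
  assume r: "reach OE x1 x3"
  from assms obtain \<gamma>1 \<gamma>2 f1 f2 where g: "\<gamma>1 \<in> Gamma E lam" "\<gamma>2 \<in> Gamma E lam" "\<gamma>1 \<noteq> \<gamma>2"
    and f1: "f1 \<in> Xe E e" "lam f1 = 1" "f1 \<subseteq> \<gamma>1" and f2: "f2 \<in> Xe E e" "lam f2 = 1" "f2 \<subseteq> \<gamma>2"
    by blast
  have "\<gamma>1 = cmp OE x1" by (rule in_Gamma_comp[OF g(1) f1 r])
  moreover have "\<gamma>2 = cmp OE x1" by (rule in_Gamma_comp[OF g(2) f2 r])
  ultimately show False using g(3) by simp
qed

end



lemma cyc_sub: "cyc_edges E lam \<gamma> - S \<subseteq> open_edges E lam - S"
  unfolding cyc_edges_def by blast

theorem lemma2p15: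
  fixes V :: "'v set" and E :: "'v set set" and lam :: "'v labeling" and e :: "'v set"
  assumes "simple_graph V E" and "connected_graph V E" and "bridgeless V E"
    and "triangle_free V E" and "cubic V E"
    and "valid_labeling E lam"
    and "e \<in> E"
  shows "((\<exists>\<gamma>1\<in>Gamma E lam. \<exists>\<gamma>2\<in>Gamma E lam. \<gamma>1 \<noteq> \<gamma>2 \<and>
             (\<exists>f\<in>Xe E e. lam f = 1 \<and> f \<subseteq> \<gamma>1) \<and> (\<exists>f\<in>Xe E e. lam f = 1 \<and> f \<subseteq> \<gamma>2))
           \<longrightarrow> typeB E (flip E e lam) e)
       \<and> (typeB E lam e \<longrightarrow>
           (\<exists>\<gamma>1\<in>Gamma E (flip E e lam). \<exists>\<gamma>2\<in>Gamma E (flip E e lam). \<gamma>1 \<noteq> \<gamma>2 \<and>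
             (\<exists>f1\<in>Xe E e. \<exists>f2\<in>Xe E e. f1 \<noteq> f2 \<and>
                flip E e lam f1 = 1 \<and> flip E e lam f2 = 1 \<and> f1 \<subseteq> \<gamma>1 \<and> f2 \<subseteq> \<gamma>2)))
       \<and> (typeA E lam e \<longrightarrow> typeA E (flip E e lam) e)"
proof (intro conjI impI)
  note sg = assms(1) and tf = assms(4) and cb = assms(5) and v = assms(6) and eE = assms(7)
  {
    assume H: "\<exists>\<gamma>1\<in>Gamma E lam. \<exists>\<gamma>2\<in>Gamma E lam. \<gamma>1 \<noteq> \<gamma>2 \<and>
             (\<exists>f\<in>Xe E e. lam f = 1 \<and> f \<subseteq> \<gamma>1) \<and> (\<exists>f\<in>Xe E e. lam f = 1 \<and> f \<subseteq> \<gamma>2)"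
    obtain x1 x2 x3 x4 where c: "cyc4 E e x1 x2 x3 x4" using struct[OF sg tf cb eE] by blast
    from alt[OF v eE c] show "typeB E (flip E e lam) e"
    proof
      assume l: "lam {x1,x2} = 1 \<and> lam {x2,x3} = 0 \<and> lam {x3,x4} = 1 \<and> lam {x4,x1} = 0"
      have "fctx V E lam e x1 x2 x3 x4"
        by (rule fctx.intro[OF sg tf cb v eE c]) (use l in simp_all)
      then show ?thesis using fctx.a_hyp H by blast
    next
      assume l: "lam {x1,x2} = 0 \<and> lam {x2,x3} = 1 \<and> lam {x3,x4} = 0 \<and> lam {x4,x1} = 1"
      have "fctx V E lam e x2 x3 x4 x1"
        by (rule fctx.intro[OF sg tf cb v eE cyc4_rot[OF c]]) (use l in simp_all)
      then show ?thesis using fctx.a_hyp H by blast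
    qed
  }
  {
    assume "typeB E lam e"
    then obtain \<gamma> x1 x2 x3 x4 where c: "cyc4 E e x1 x2 x3 x4"
      and l12: "lam {x1,x2} = 1" and l34: "lam {x3,x4} = 1"
      and r23: "reach (cyc_edges E lam \<gamma> - {{x1, x2}, {x3, x4}}) x2 x3"
      and r41: "reach (cyc_edges E lam \<gamma> - {{x1, x2}, {x3, x4}}) x4 x1"
      unfolding typeB_def by blast
    have l: "lam {x2,x3} = 0" "lam {x4,x1} = 0" using alt[OF v eE c] l12 by auto
    have F: "fctx V E lam e x1 x2 x3 x4"
      by (rule fctx.intro[OF sg tf cb v eE c l12 l(1) l34 l(2)])
    show "\<exists>\<gamma>1\<in>Gamma E (flip E e lam). \<exists>\<gamma>2\<in>Gamma E (flip E e lam). \<gamma>1 \<noteq> \<gamma>2 \<and>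
             (\<exists>f1\<in>Xe E e. \<exists>f2\<in>Xe E e. f1 \<noteq> f2 \<and>
                flip E e lam f1 = 1 \<and> flip E e lam f2 = 1 \<and> f1 \<subseteq> \<gamma>1 \<and> f2 \<subseteq> \<gamma>2)"
      by (rule fctx.core_b[OF F reach_mono[OF r23 cyc_sub] reach_mono[OF r41 cyc_sub]])
  }
  {
    assume "typeA E lam e"
    then obtain \<gamma> x1 x2 x3 x4 where c: "cyc4 E e x1 x2 x3 x4"
      and l12: "lam {x1,x2} = 1" and l34: "lam {x3,x4} = 1"
      and r13: "reach (cyc_edges E lam \<gamma> - {{x1, x2}, {x3, x4}}) x1 x3"
      and r24: "reach (cyc_edges E lam \<gamma> - {{x1, x2}, {x3, x4}}) x2 x4"
      unfolding typeA_def by blast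
    have l: "lam {x2,x3} = 0" "lam {x4,x1} = 0" using alt[OF v eE c] l12 by auto
    have F: "fctx V E lam e x1 x2 x3 x4"
      by (rule fctx.intro[OF sg tf cb v eE c l12 l(1) l34 l(2)])
    show "typeA E (flip E e lam) e"
      by (rule fctx.core_c[OF F reach_mono[OF r13 cyc_sub] reach_mono[OF r24 cyc_sub]])
  }
qed


end
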